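(* Let $C$ be a convex set in a finite-dimensional Euclidean space $\mathcal{E}$ and let $F$ be a face of $C$. The following are equivalent: (i) $F$ is an amenable face of $C$; (ii) $C$ and $\operatorname{aff}F$ are boundedly linearly regular, i.e. for every bounded set $B$ there exists $\kappa_B>0$ such that $\operatorname{dist}(x,F)\le\kappa_B\max\{\operatorname{dist}(x,\operatorname{aff}F),\operatorname{dist}(x,C)\}$ for all $x\in B$; (iii) $C$ and $\operatorname{aff}F$ are subtransversal at every point of $F$.
   Context: A face of a convex set $C$ is a closed convex subset $F\subseteq C$ such that whenever $x,y\in C$ and $\alpha x+(1-\alpha)y\in F$ for some $\alpha\in(0,1)$, then $x,y\in F$; note $F=C\cap\operatorname{aff}F$. A face $F$ of $C$ is amenable if for every bounded set $B$ there exists $\kappa>0$ such that $\operatorname{dist}(x,F)\le\kappa\operatorname{dist}(x,C)$ for all $x\in(\operatorname{aff}F)\cap B$. Sets $C_1,C_2$ are subtransversal at $x^*\in C_1\cap C_2$ if there exist a neighbourhood $U$ of $x^*$ and $\kappa>0$ with $\operatorname{dist}(x,C_1\cap C_2)\le\kappa(\operatorname{dist}(x,C_1)+\operatorname{dist}(x,C_2))$ for all $x\in U$. *)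

theory Defs
  imports "HOL-Analysis.Analysis"
begin

definition is_face :: "'a::euclidean_space set \<Rightarrow> 'a set \<Rightarrow> bool" where
  "is_face F C \<longleftrightarrow> F \<subseteq> C \<and> closed F \<and> convex F \<and>
     (\<forall>x\<in>C. \<forall>y\<in>C. \<forall>\<alpha>::real. 0 < \<alpha> \<and> \<alpha> < 1 \<and> \<alpha> *\<^sub>R x + (1 - \<alpha>) *\<^sub>R y \<in> F \<longrightarrow> x \<in> F \<and> y \<in> F)"

definition amenable_face :: "'a::euclidean_space set \<Rightarrow> 'a set \<Rightarrow> bool" where
  "amenable_face F C \<longleftrightarrow> is_face F C \<and>
     (\<forall>B. bounded B \<longrightarrow> (\<exists>\<kappa>>0. \<forall>x \<in> affine hull F \<inter> B. infdist x F \<le> \<kappa> * infdist x C))"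

definition face_blr :: "'a::euclidean_space set \<Rightarrow> 'a set \<Rightarrow> bool" where
  "face_blr F C \<longleftrightarrow>
     (\<forall>B. bounded B \<longrightarrow> (\<exists>\<kappa>>0. \<forall>x\<in>B.
        infdist x F \<le> \<kappa> * max (infdist x (affine hull F)) (infdist x C)))"

definition subtransversal_at :: "'a::euclidean_space set \<Rightarrow> 'a set \<Rightarrow> 'a \<Rightarrow> bool" where
  "subtransversal_at C1 C2 x0 \<longleftrightarrow> x0 \<in> C1 \<inter> C2 \<and>
     (\<exists>U \<kappa>. open U \<and> x0 \<in> U \<and> \<kappa> > 0 \<and>
        (\<forall>x\<in>U. infdist x (C1 \<inter> C2) \<le> \<kappa> * (infdist x C1 + infdist x C2)))"

end

theory Submission
  imports Defs
begin

lemma face_aff: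
  fixes C F :: "'a::euclidean_space set"
  assumes "convex C" and fc: "is_face F C"
  shows "C \<inter> affine hull F = F"
proof
  show "F \<subseteq> C \<inter> affine hull F" using fc hull_subset[of F affine] by (auto simp: is_face_def)
next
  show "C \<inter> affine hull F \<subseteq> F"
  proof
    fix y assume y: "y \<in> C \<inter> affine hull F"
    have cF: "convex F" using fc by (simp add: is_face_def)
    have Fne: "F \<noteq> {}" using y by auto
    then obtain x where x: "x \<in> rel_interior F" using rel_interior_eq_empty[OF cF] by blast
    then obtain e where e: "e > 0" "ball x e \<inter> affine hull F \<subseteq> F" and xF: "x \<in> F"
      using mem_rel_interior_ball by blast
    show "y \<in> F"
    proof (cases "y = x")
      case True then show ?thesis using xF by simp
    next
      case False
      then have np: "norm (x - y) > 0" by simp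
      define \<epsilon> where "\<epsilon> = e / (2 * norm (x - y))"
      have ep: "\<epsilon> > 0" using e np by (simp add: \<epsilon>_def)
      define z where "z = (1 + \<epsilon>) *\<^sub>R x + (- \<epsilon>) *\<^sub>R y"
      have "x \<in> affine hull F" using xF hull_subset[of F affine] by auto
      then have zA: "z \<in> affine hull F" unfolding z_def
        using y affine_affine_hull[of F] mem_affine by (metis IntD2 add_diff_cancel_right' diff_minus_eq_add)
      have "z - x = \<epsilon> *\<^sub>R (x - y)" by (simp add: z_def algebra_simps)
      have "dist x z = norm (z - x)" by (metis dist_norm dist_commute)
      also have "\<dots> = \<epsilon> * norm (x - y)" using ep \<open>z - x = \<epsilon> *\<^sub>R (x - y)\<close> by simp
      also have "\<dots> = e / 2" using np by (simp add: \<epsilon>_def)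
      finally have "z \<in> ball x e" using e by simp
      then have zF: "z \<in> F" using e zA by blast
      then have zC: "z \<in> C" using fc by (auto simp: is_face_def)
      define \<alpha> where "\<alpha> = 1 / (1 + \<epsilon>)"
      have a0: "0 < \<alpha>" "\<alpha> < 1" using ep by (auto simp: \<alpha>_def)
      have h1: "\<alpha> * (1 + \<epsilon>) = 1" using ep by (simp add: \<alpha>_def)
      have h2: "1 - \<alpha> = \<alpha> * \<epsilon>" using h1 by (simp add: algebra_simps)
      have "\<alpha> *\<^sub>R z = (\<alpha> * (1 + \<epsilon>)) *\<^sub>R x - (\<alpha> * \<epsilon>) *\<^sub>R y"
        by (simp add: z_def scaleR_diff_right)
      then have "\<alpha> *\<^sub>R z + (1 - \<alpha>) *\<^sub>R y = x" using h1 h2 by simp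
      then have "\<alpha> *\<^sub>R z + (1 - \<alpha>) *\<^sub>R y \<in> F" using xF by simp
      then show ?thesis using fc zC y a0 unfolding is_face_def by blast
    qed
  qed
qed


lemma closure_aff_sub:
  fixes C F :: "'a::euclidean_space set"
  assumes cC: "convex C" and fc: "is_face F C" and Fne: "F \<noteq> {}"
    and st: "\<forall>x\<in>F. subtransversal_at C (affine hull F) x"
    and y: "y \<in> closure C" "y \<in> affine hull F"
  shows "y \<in> F"
proof -
  have eq: "C \<inter> affine hull F = F" using face_aff[OF cC fc] .
  have clF: "closed F" and FC: "F \<subseteq> C" using fc by (auto simp: is_face_def)
  obtain x where xF: "x \<in> F" using Fne by blast
  have xA: "x \<in> affine hull F" using xF hull_subset[of F affine] by auto
  have xC: "x \<in> closure C" using xF FC closure_subset by blast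
  have Cne: "C \<noteq> {}" using xF FC by blast
  define p where "p t = x + t *\<^sub>R (y - x)" for t :: real
  have pC: "p t \<in> closure C" if "0 \<le> t" "t \<le> 1" for t
  proof -
    have "p t = (1 - t) *\<^sub>R x + t *\<^sub>R y" by (simp add: p_def algebra_simps)
    then show ?thesis using convexD[OF convex_closure[OF cC] xC y(1), of "1 - t" t] that by simp
  qed
  have pA: "p t \<in> affine hull F" for t
  proof -
    have "p t = (1 - t) *\<^sub>R x + t *\<^sub>R y" by (simp add: p_def algebra_simps)
    then show ?thesis using mem_affine[OF affine_affine_hull xA y(2), of "1 - t" t] by simp
  qed
  have loc: "\<exists>e>0. \<forall>z\<in>ball w e. z \<in> closure C \<longrightarrow> z \<in> affine hull F \<longrightarrow> z \<in> F"
    if wF: "w \<in> F" for w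
  proof -
    obtain U \<kappa> where U: "open U" "w \<in> U" "\<kappa> > 0"
        "\<forall>z\<in>U. infdist z (C \<inter> affine hull F) \<le> \<kappa> * (infdist z C + infdist z (affine hull F))"
      using st wF unfolding subtransversal_at_def by blast
    obtain e where e: "e > 0" "ball w e \<subseteq> U" using U(1,2) open_contains_ball by blast
    have "z \<in> F" if "z \<in> ball w e" "z \<in> closure C" "z \<in> affine hull F" for z
    proof -
      have "infdist z C = 0" using that in_closure_iff_infdist_zero[OF Cne] by blast
      moreover have "infdist z (affine hull F) = 0" using that by simp
      ultimately have "infdist z F \<le> 0" using U(4) e(2) that(1) eq by force
      then have "infdist z F = 0" using infdist_nonneg[of z F] by linarith
      then show ?thesis using in_closed_iff_infdist_zero[OF clF Fne] by blast
    qed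
    then show ?thesis using e(1) by blast
  qed
  define S where "S = {t. 0 \<le> t \<and> t \<le> 1 \<and> p t \<in> F}"
  have cp: "continuous (at t) p" for t unfolding p_def by (intro continuous_intros)
  have "S = {0..1} \<inter> p -` F" unfolding S_def by auto
  then have clS: "closed S" using continuous_closed_vimage[OF clF cp] closed_Int closed_atLeastAtMost
    by metis
  have S0: "0 \<in> S" using xF by (simp add: S_def p_def)
  have bS: "bdd_above S" unfolding S_def bdd_above_def by auto
  define T where "T = Sup S"
  have TS: "T \<in> S" unfolding T_def using closed_contains_Sup[OF _ bS clS] S0 by blast
  have "T = 1"
  proof (rule ccontr)
    assume "T \<noteq> 1"
    then have T1: "T < 1" "0 \<le> T" using TS by (auto simp: S_def)
    obtain e where e: "e > 0" "\<forall>z\<in>ball (p T) e. z \<in> closure C \<longrightarrow> z \<in> affine hull F \<longrightarrow> z \<in> F"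
      using loc TS by (auto simp: S_def)
    define t where "t = min 1 (T + e / (2 * (norm (y - x) + 1)))"
    have "2 * (norm (y - x) + 1) > 0" by (smt (verit) norm_ge_zero)
    then have d0: "e / (2 * (norm (y - x) + 1)) > 0" using e(1) by (intro divide_pos_pos)
    have tT: "T < t" "t \<le> 1" using T1 d0 by (auto simp: t_def)
    have "p t - p T = (t - T) *\<^sub>R (y - x)" by (simp add: p_def scaleR_diff_left)
    have "dist (p T) (p t) = norm (p t - p T)" by (simp add: dist_norm norm_minus_commute)
    also have "\<dots> = (t - T) * norm (y - x)" using \<open>p t - p T = (t - T) *\<^sub>R (y - x)\<close> tT by simp
    also have "\<dots> \<le> (e / (2 * (norm (y - x) + 1))) * norm (y - x)"
      by (intro mult_right_mono) (auto simp: t_def)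
    also have "\<dots> < e"
    proof -
      have pos: "norm (y - x) + 1 > 0" by (smt (verit) norm_ge_zero)
      have q: "e / (2 * (norm (y - x) + 1)) * norm (y - x) \<le> e / (2 * (norm (y - x) + 1)) * (norm (y - x) + 1)"
        using d0 by (intro mult_left_mono) auto
      have "e / (2 * (norm (y - x) + 1)) * (norm (y - x) + 1) = e / 2" using pos by (simp add: field_simps)
      then show ?thesis using q e(1) by linarith
    qed
    finally have "p t \<in> ball (p T) e" by simp
    then have "p t \<in> F" using e(2) pC pA tT T1 by simp
    then have "t \<in> S" using tT T1 by (simp add: S_def)
    then have "t \<le> T" unfolding T_def using cSup_upper[OF _ bS] by blast
    then show False using tT by simp
  qed
  then show ?thesis using TS by (simp add: S_def p_def)
qed



lemma infdist_emp: "infdist x {} = 0" by (simp add: infdist_def)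

lemma A_dir:
  fixes C F :: "'a::euclidean_space set"
  assumes cC: "convex C" and fc: "is_face F C" and am: "amenable_face F C"
  shows "face_blr F C"
  unfolding face_blr_def
proof (intro allI impI)
  fix B :: "'a set" assume bB: "bounded B"
  show "\<exists>\<kappa>>0. \<forall>x\<in>B. infdist x F \<le> \<kappa> * max (infdist x (affine hull F)) (infdist x C)"
  proof (cases "F = {}")
    case True
    then show ?thesis using infdist_nonneg
      by (intro exI[of _ 1]) (auto simp: infdist_emp le_max_iff_disj)
  next
    case False
    then obtain f0 where f0: "f0 \<in> F" by blast
    have f0A: "f0 \<in> affine hull F" using f0 hull_subset[of F affine] by auto
    obtain R where R: "R > 0" "\<forall>x\<in>B. norm x \<le> R" using bB bounded_pos by blast
    define B' where "B' = cball (0::'a) (2 * R + norm f0)"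
    have "bounded B'" by (simp add: B'_def)
    then obtain \<kappa> where k: "\<kappa> > 0" "\<forall>p\<in>affine hull F \<inter> B'. infdist p F \<le> \<kappa> * infdist p C"
      using am unfolding amenable_face_def by blast
    show ?thesis
    proof (intro exI[of _ "2 * \<kappa> + 1"] conjI ballI)
      show "2 * \<kappa> + 1 > 0" using k by simp
      fix x assume xB: "x \<in> B"
      obtain p where p: "p \<in> affine hull F" "infdist x (affine hull F) = dist x p"
        using infdist_attains_inf[OF closed_affine_hull, of F] False by auto
      have "dist x p \<le> dist x f0" using p infdist_le[OF f0A, of x] by simp
      also have "\<dots> \<le> norm x + norm f0" by (simp add: dist_norm norm_triangle_ineq4)
      finally have dd: "dist x p \<le> norm x + norm f0" .
      have nx: "norm x \<le> R" using R(2) xB by blast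
      have "norm p \<le> 2 * R + norm f0"
        using dd nx norm_triangle_sub[of p x] dist_norm[of p x] dist_commute[of x p] by linarith
      then have "p \<in> B'" by (simp add: B'_def)
      then have pk: "infdist p F \<le> \<kappa> * infdist p C" using k p by blast
      define a where "a = infdist x (affine hull F)"
      define c where "c = infdist x C"
      define m where "m = max a c"
      have t1: "infdist x F \<le> infdist p F + a" using infdist_triangle[of x F p] p by (simp add: a_def)
      have t2: "infdist p C \<le> c + a" using infdist_triangle[of p C x] p
        by (simp add: a_def c_def dist_commute)
      have "\<kappa> * infdist p C \<le> \<kappa> * (c + a)" using t2 k by (intro mult_left_mono) auto
      also have "\<dots> \<le> \<kappa> * (m + m)" using k by (intro mult_left_mono) (auto simp: m_def)
      finally have "infdist x F \<le> \<kappa> * (m + m) + m" using t1 pk by (simp add: m_def)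
      then show "infdist x F \<le> (2 * \<kappa> + 1) * max (infdist x (affine hull F)) (infdist x C)"
        by (simp add: m_def a_def c_def algebra_simps)
    qed
  qed
qed

lemma B_dir:
  fixes C F :: "'a::euclidean_space set"
  assumes fc: "is_face F C" and bl: "face_blr F C"
  shows "amenable_face F C"
  unfolding amenable_face_def
proof (intro conjI allI impI fc)
  fix B :: "'a set" assume "bounded B"
  then obtain \<kappa> where k: "\<kappa> > 0" "\<forall>x\<in>B. infdist x F \<le> \<kappa> * max (infdist x (affine hull F)) (infdist x C)"
    using bl unfolding face_blr_def by blast
  show "\<exists>\<kappa>>0. \<forall>x \<in> affine hull F \<inter> B. infdist x F \<le> \<kappa> * infdist x C"
  proof (intro exI[of _ \<kappa>] conjI ballI)
    show "\<kappa> > 0" using k by simp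
    fix x assume x: "x \<in> affine hull F \<inter> B"
    then have "infdist x (affine hull F) = 0" by simp
    then have "max (infdist x (affine hull F)) (infdist x C) = infdist x C"
      using infdist_nonneg[of x C] by simp
    then show "infdist x F \<le> \<kappa> * infdist x C" using k(2) x by force
  qed
qed

lemma C_dir:
  fixes C F :: "'a::euclidean_space set"
  assumes cC: "convex C" and fc: "is_face F C" and bl: "face_blr F C"
  shows "\<forall>x\<in>F. subtransversal_at C (affine hull F) x"
proof
  fix w assume wF: "w \<in> F"
  have eq: "C \<inter> affine hull F = F" using face_aff[OF cC fc] .
  obtain \<kappa> where k: "\<kappa> > 0" "\<forall>x\<in>ball w 1. infdist x F \<le> \<kappa> * max (infdist x (affine hull F)) (infdist x C)"
    using bl unfolding face_blr_def by (meson bounded_ball)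
  have "infdist x (C \<inter> affine hull F) \<le> \<kappa> * (infdist x C + infdist x (affine hull F))" if "x \<in> ball w 1" for x
  proof -
    have "\<kappa> * max (infdist x (affine hull F)) (infdist x C) \<le> \<kappa> * (infdist x C + infdist x (affine hull F))"
      using k(1) infdist_nonneg[of x C] infdist_nonneg[of x "affine hull F"]
      by (intro mult_left_mono) auto
    then show ?thesis using k(2) that eq by force
  qed
  then show "subtransversal_at C (affine hull F) w"
    unfolding subtransversal_at_def using wF eq k(1)
    by (intro conjI exI[of _ "ball w 1"] exI[of _ \<kappa>]) auto
qed


lemma D_dir:
  fixes C F :: "'a::euclidean_space set"
  assumes cC: "convex C" and fc: "is_face F C" and st: "\<forall>x\<in>F. subtransversal_at C (affine hull F) x"
  shows "face_blr F C"
proof (rule ccontr)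
  define g where "g x = max (infdist x (affine hull F)) (infdist x C)" for x
  have g0: "g x \<ge> 0" for x using infdist_nonneg[of x C] by (simp add: g_def le_max_iff_disj)
  have eq: "C \<inter> affine hull F = F" using face_aff[OF cC fc] .
  assume "\<not> face_blr F C"
  then obtain B where bB: "bounded B" and H: "\<forall>\<kappa>>0. \<exists>x\<in>B. infdist x F > \<kappa> * g x"
    unfolding face_blr_def g_def by (metis not_le)
  have Fne: "F \<noteq> {}"
  proof
    assume "F = {}"
    obtain x where "x \<in> B" "1 * g x < infdist x F" using H zero_less_one by blast
    moreover have "infdist x F = 0" using \<open>F = {}\<close> infdist_emp by blast
    ultimately show False using g0[of x] by linarith
  qed
  then obtain f0 where f0: "f0 \<in> F" by blast
  have Cne: "C \<noteq> {}" using f0 fc by (auto simp: is_face_def)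
  have Ane: "affine hull F \<noteq> {}" using Fne by simp
  have "\<forall>n::nat. \<exists>x. x \<in> B \<and> infdist x F > (real n + 1) * g x"
  proof
    fix n :: nat
    have "real n + 1 > 0" by simp
    then show "\<exists>x. x \<in> B \<and> infdist x F > (real n + 1) * g x" using H by blast
  qed
  then obtain xs where "\<forall>n. xs n \<in> B \<and> infdist (xs n) F > (real n + 1) * g (xs n)"
    using choice[of "\<lambda>n x. x \<in> B \<and> infdist x F > (real n + 1) * g x"] by blast
  then have xs: "\<And>n. xs n \<in> B" "\<And>n. infdist (xs n) F > (real n + 1) * g (xs n)" by auto
  have "seq_compact (closure B)" using bB by (intro compact_imp_seq_compact) simp
  moreover have "\<forall>n. xs n \<in> closure B" using xs(1) closure_subset by blast
  ultimately obtain l r where lr: "l \<in> closure B" "strict_mono r" "(xs \<circ> r) \<longlonglongrightarrow> l"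
    by (rule seq_compactE)
  obtain R where R: "R > 0" "\<forall>x\<in>B. norm x \<le> R" using bB bounded_pos by blast
  define M where "M = R + norm f0"
  have bM: "infdist (xs n) F \<le> M" for n
  proof -
    have "infdist (xs n) F \<le> dist (xs n) f0" using infdist_le[OF f0] .
    also have "\<dots> \<le> norm (xs n) + norm f0" by (simp add: dist_norm norm_triangle_ineq4)
    finally have "infdist (xs n) F \<le> norm (xs n) + norm f0" .
    moreover have "norm (xs n) \<le> R" using R(2) xs(1)[of n] by blast
    ultimately show ?thesis by (simp add: M_def)
  qed
  have gb: "g (xs (r n)) \<le> M / (real n + 1)" for n
  proof -
    have "n \<le> r n" using seq_suble[OF lr(2)] .
    then have "(real n + 1) * g (xs (r n)) \<le> (real (r n) + 1) * g (xs (r n))"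
      using g0 by (intro mult_right_mono) auto
    also have "\<dots> < M" using xs(2)[of "r n"] bM[of "r n"] by linarith
    finally show ?thesis by (simp add: pos_le_divide_eq mult.commute add_pos_nonneg)
  qed
  have "(\<lambda>n. M / real (Suc n)) \<longlonglongrightarrow> 0" using LIMSEQ_Suc[OF lim_const_over_n[of M]] by simp
  then have lim0: "(\<lambda>n. M / (real n + 1)) \<longlonglongrightarrow> 0" by (simp add: add.commute)
  have t0: "(\<lambda>n. g (xs (r n))) \<longlonglongrightarrow> 0"
    by (rule tendsto_sandwich[OF _ _ tendsto_const lim0]) (simp_all add: g0 gb)
  have "(\<lambda>n. g ((xs \<circ> r) n)) \<longlonglongrightarrow> g l"
    unfolding g_def by (intro tendsto_max tendsto_infdist lr(3))
  then have "(\<lambda>n. g (xs (r n))) \<longlonglongrightarrow> g l" by (simp add: o_def)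
  then have "g l = 0" using LIMSEQ_unique[OF _ t0] by blast
  then have "infdist l C = 0" "infdist l (affine hull F) = 0"
  proof -
    have "infdist l C \<le> g l" "infdist l (affine hull F) \<le> g l" by (simp_all add: g_def)
    then show "infdist l C = 0" "infdist l (affine hull F) = 0"
      using \<open>g l = 0\<close> infdist_nonneg[of l C] infdist_nonneg[of l "affine hull F"] by linarith+
  qed
  then have "l \<in> closure C" "l \<in> affine hull F"
    using in_closure_iff_infdist_zero[OF Cne] in_closed_iff_infdist_zero[OF closed_affine_hull Ane] by auto
  then have lF: "l \<in> F" using closure_aff_sub[OF cC fc Fne st] by blast
  obtain U \<kappa> where U: "open U" "l \<in> U" "\<kappa> > 0"
      "\<forall>z\<in>U. infdist z (C \<inter> affine hull F) \<le> \<kappa> * (infdist z C + infdist z (affine hull F))"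
    using st lF unfolding subtransversal_at_def by blast
  have "eventually (\<lambda>n. (xs \<circ> r) n \<in> U) sequentially"
    using topological_tendstoD[OF lr(3) U(1,2)] .
  then obtain N1 where N1: "\<And>n. n \<ge> N1 \<Longrightarrow> xs (r n) \<in> U" by (auto simp: eventually_sequentially)
  obtain N2 :: nat where N2: "2 * \<kappa> \<le> real N2" using real_arch_simple by blast
  define n where "n = max N1 N2"
  define z where "z = xs (r n)"
  have zU: "z \<in> U" using N1 by (simp add: z_def n_def)
  have "N2 \<le> n" by (simp add: n_def)
  then have "real N2 \<le> real (r n)" using seq_suble[OF lr(2), of n] by linarith
  then have big: "2 * \<kappa> \<le> real (r n) + 1" using N2 by linarith
  have "infdist z C \<le> g z" "infdist z (affine hull F) \<le> g z" by (simp_all add: g_def)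
  then have kk: "\<kappa> * (infdist z C + infdist z (affine hull F)) \<le> \<kappa> * (g z + g z)"
    using U(3) by (intro mult_left_mono) auto
  have "infdist z F = infdist z (C \<inter> affine hull F)" using eq by simp
  also have "\<dots> \<le> \<kappa> * (infdist z C + infdist z (affine hull F))" using U(4) zU by blast
  also have "\<dots> \<le> \<kappa> * (g z + g z)" by (rule kk)
  also have "\<dots> = (2 * \<kappa>) * g z" by simp
  also have "\<dots> \<le> (real (r n) + 1) * g z" using big g0 by (intro mult_right_mono) auto
  also have "\<dots> < infdist z F" using xs(2)[of "r n"] by (simp add: z_def)
  finally show False by simp
qed


theorem proposition3p2:
  fixes C F :: "'a::euclidean_space set"
  assumes "convex C" and "is_face F C"
  shows "(amenable_face F C \<longleftrightarrow> face_blr F C)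
       \<and> (face_blr F C \<longleftrightarrow>
            (\<forall>x\<in>F. subtransversal_at C (affine hull F) x))"
  using A_dir[OF assms] B_dir[OF assms(2)] C_dir[OF assms] D_dir[OF assms] by blast

end
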